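(* Let $G$ be a graph with demand functions $f$ and $g$ and fractional list-assignment $L$ such that for each $v\in V(G)$, $g(v) \leq f(v)\mu(L(v))$. If for each $S\subseteq V(G)$ with $\mu(\bigcap_{v\in S}L(v)) > 0$ the graph $G[S]$ has an $f$-coloring (with respect to $f$ restricted to $S$), then $G$ has a fractional $(g, L)$-coloring.
   Context: A demand function for a graph $G$ is a function $f: V(G)\to [0,1]\cap\mathbb{Q}$. A fractional coloring of $G$ is a function $\phi$ assigning to each $v\in V(G)$ a measurable subset $\phi(v)\subseteq[0,1]$ such that $\phi(u)\cap\phi(v)=\varnothing$ for every edge $uv$; an $f$-coloring is a fractional coloring with $\mu(\phi(v))\geq f(v)$ for all $v$, $\mu$ being Lebesgue measure. A fractional list-assignment is a function $L$ assigning to each vertex a measurable subset $L(v)\subseteq[0,1]$. A fractional $(g,L)$-coloring is a $g$-coloring $\phi$ with $\phi(v)\subseteq L(v)$ for all $v$. *)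

theory Defs
  imports "HOL-Analysis.Analysis"
begin

definition graph :: "'a set \<Rightarrow> ('a \<Rightarrow> 'a \<Rightarrow> bool) \<Rightarrow> bool" where
  "graph V E \<longleftrightarrow> finite V \<and> (\<forall>u v. E u v \<longrightarrow> u \<in> V \<and> v \<in> V)
     \<and> (\<forall>u v. E u v \<longrightarrow> E v u) \<and> (\<forall>v. \<not> E v v)"

definition demand_function :: "'a set \<Rightarrow> ('a \<Rightarrow> real) \<Rightarrow> bool" where
  "demand_function V f \<longleftrightarrow> (\<forall>v\<in>V. f v \<in> \<rat> \<and> 0 \<le> f v \<and> f v \<le> 1)"

definition fractional_list_assignment :: "'a set \<Rightarrow> ('a \<Rightarrow> real set) \<Rightarrow> bool" where
  "fractional_list_assignment V L \<longleftrightarrow> (\<forall>v\<in>V. L v \<in> sets lebesgue \<and> L v \<subseteq> {0..1})"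

text \<open>Fractional coloring of the graph (V,E) (also used for induced subgraphs G[S]
  by passing S as vertex set: only edges between vertices of S are constrained).\<close>
definition fractional_coloring :: "'a set \<Rightarrow> ('a \<Rightarrow> 'a \<Rightarrow> bool) \<Rightarrow> ('a \<Rightarrow> real set) \<Rightarrow> bool" where
  "fractional_coloring V E \<phi> \<longleftrightarrow>
     (\<forall>v\<in>V. \<phi> v \<in> sets lebesgue \<and> \<phi> v \<subseteq> {0..1})
     \<and> (\<forall>u\<in>V. \<forall>v\<in>V. E u v \<longrightarrow> \<phi> u \<inter> \<phi> v = {})"

definition f_coloring :: "'a set \<Rightarrow> ('a \<Rightarrow> 'a \<Rightarrow> bool) \<Rightarrow> ('a \<Rightarrow> real) \<Rightarrow> ('a \<Rightarrow> real set) \<Rightarrow> bool" where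
  "f_coloring V E f \<phi> \<longleftrightarrow> fractional_coloring V E \<phi> \<and> (\<forall>v\<in>V. measure lebesgue (\<phi> v) \<ge> f v)"

definition gL_coloring :: "'a set \<Rightarrow> ('a \<Rightarrow> 'a \<Rightarrow> bool) \<Rightarrow> ('a \<Rightarrow> real) \<Rightarrow> ('a \<Rightarrow> real set) \<Rightarrow> ('a \<Rightarrow> real set) \<Rightarrow> bool" where
  "gL_coloring V E g L \<phi> \<longleftrightarrow> f_coloring V E g \<phi> \<and> (\<forall>v\<in>V. \<phi> v \<subseteq> L v)"

end

theory Submission
  imports Defs "HOL-Probability.Probability"
begin

lemma borel_inner:
  assumes "C \<in> sets lebesgue"
  shows "\<exists>B \<in> sets borel. B \<subseteq> C \<and> measure lebesgue B = measure lebesgue (C::real set)"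
proof -
  obtain D T where D: "fsigma D" "T \<in> null_sets lebesgue" "D \<union> T = C" "disjnt D T"
    using lebesgue_set_almost_fsigma[OF assms] by blast
  from D(1) have Db: "D \<in> sets borel"
  proof cases
    case (1 F)
    have "\<And>n. F n \<in> sets borel" using 1(2) by (rule borel_closed)
    then show ?thesis unfolding 1(1) by (intro sets.countable_UN) auto
  qed
  then have "D \<in> sets lebesgue" by (simp add: sets_completionI_sets)
  then have "measure lebesgue C = measure lebesgue D"
    using D(2,3) measure_Un_null_set[of D lebesgue T] by simp
  then show ?thesis using D(3) Db by (intro bexI[of _ D]) auto
qed

lemma transport:
  fixes A :: "real set"
  assumes A: "A \<in> sets lebesgue" "A \<subseteq> {0..1}" "measure lebesgue A > 0"
  defines "F \<equiv> \<lambda>x. measure lebesgue (A \<inter> {..x}) / measure lebesgue A"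
  shows "F \<in> borel_measurable borel"
    and "\<And>B. B \<in> sets borel \<Longrightarrow> measure lebesgue (A \<inter> F -` B) = measure lebesgue A * measure lborel ({0..1} \<inter> B)"
proof -
  define m where "m = measure lebesgue A"
  have mpos: "m > 0" using A(3) m_def by simp
  have Al: "A \<in> lmeasurable"
    using A(1,2) compact_imp_bounded[OF compact_Icc[of 0 1]] by (meson bounded_subset bounded_set_imp_lmeasurable)
  have Axl: "A \<inter> {..x} \<in> lmeasurable" for x :: real
    using Al by (intro fmeasurable_Int_fmeasurable) simp_all
  define mu where "mu x = measure lebesgue (A \<inter> {..x})" for x :: real
  have F_eq: "F x = mu x / m" for x unfolding F_def mu_def m_def by simp
  have mu_mono: "mu x \<le> mu y" if "x \<le> y" for x y
    unfolding mu_def using that Axl by (intro measure_mono_fmeasurable) auto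
  have mu_lip: "mu y - mu x \<le> y - x" if "x \<le> y" for x y
  proof -
    have "A \<inter> {..y} \<subseteq> (A \<inter> {..x}) \<union> {x..y}" by auto
    then have "mu y \<le> measure lebesgue ((A \<inter> {..x}) \<union> {x..y})"
      unfolding mu_def using Axl by (intro measure_mono_fmeasurable) auto
    also have "\<dots> \<le> mu x + measure lebesgue {x..y}"
      unfolding mu_def using Axl by (intro measure_Un_le) auto
    also have "measure lebesgue {x..y} = y - x" using that by simp
    finally show ?thesis by simp
  qed
  have "1-lipschitz_on UNIV mu"
  proof (rule lipschitz_onI)
    fix x y :: real
    show "dist (mu x) (mu y) \<le> 1 * dist x y"
      using mu_lip[of x y] mu_lip[of y x] mu_mono[of x y] mu_mono[of y x]
      by (cases "x \<le> y") (auto simp: dist_real_def)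
  qed simp
  then have mu_cont: "continuous_on UNIV mu" by (rule lipschitz_on_continuous_on)
  then have F_cont: "continuous_on UNIV F" unfolding F_eq using mpos by (intro continuous_intros) auto
  have F_mono: "mono F" unfolding mono_def F_eq using mu_mono mpos by (auto intro: divide_right_mono)
  show Fb: "F \<in> borel_measurable borel" using F_mono by (rule borel_measurable_mono)
  have mu_neg: "mu x = 0" if "x \<le> 0" for x :: real
  proof -
    have "A \<inter> {..x} \<subseteq> {0..0}" using A(2) that by auto
    then have "mu x \<le> measure lebesgue {0::real}" unfolding mu_def using Axl
      by (intro measure_mono_fmeasurable) (auto simp: fmeasurable_def)
    moreover have "measure lebesgue {0::real} = 0" using measure_lborel_Icc[of 0 "0::real"] by simp
    ultimately show ?thesis unfolding mu_def by (simp add: measure_nonneg antisym)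
  qed
  have mu_one: "mu x = m" if "1 \<le> x" for x :: real
  proof -
    have "A \<inter> {..x} = A" using A(2) that by auto
    then show ?thesis unfolding mu_def m_def by simp
  qed
  have F0: "F x = 0" if "x \<le> 0" for x using mu_neg[OF that] F_eq by simp
  have F1: "F x = 1" if "1 \<le> x" for x using mu_one[OF that] F_eq mpos by simp
  have Fnn: "0 \<le> F x" for x unfolding F_eq mu_def using mpos by simp
  have Fle1: "F x \<le> 1" for x :: real
  proof -
    have "mu x \<le> m" unfolding mu_def m_def using Axl Al by (intro measure_mono_fmeasurable) auto
    then show ?thesis unfolding F_eq using mpos by simp
  qed
  have cdfA: "measure lebesgue (A \<inter> {y. F y \<le> t}) = m * measure lborel ({0..1} \<inter> {..t})" for t
  proof -
    consider "t < 0" | "0 \<le> t" "t < 1" | "1 \<le> t" by linarith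
    then show ?thesis
    proof cases
      case 1
      then have "{y. F y \<le> t} = {}" using Fnn by (auto simp: not_le) (meson less_le_trans)
      moreover have "{0..1} \<inter> {..t} = ({}::real set)" using 1 by auto
      ultimately show ?thesis by simp
    next
      case 3
      then have "{y. F y \<le> t} = UNIV" using Fle1 by (auto intro: order_trans)
      moreover have "{0..1} \<inter> {..t} = ({0..1}::real set)" using 3 by auto
      ultimately show ?thesis using m_def by simp
    next
      case 2
      have "\<exists>s0\<ge>0. s0 \<le> 1 \<and> F s0 = t"
        using 2 F0[of 0] F1[of 1] F_cont
        by (intro IVT) (auto simp: continuous_on_eq_continuous_at)
      then obtain s0 where s0: "F s0 = t" by blast
      define K where "K = {y. F y \<le> t}"
      have Kc: "closed K" unfolding K_def using F_cont by (intro closed_Collect_le) auto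
      have Kne: "K \<noteq> {}" using s0 K_def by auto
      have Kle: "y \<le> 1" if "y \<in> K" for y
      proof (rule ccontr)
        assume "\<not> y \<le> 1"
        then have "F y = 1" using F1 by simp
        then show False using that 2 K_def by simp
      qed
      have Kb: "bdd_above K" using Kle by (rule bdd_aboveI)
      define s where "s = Sup K"
      have sK: "s \<in> K" unfolding s_def using Kne Kb Kc by (rule closed_contains_Sup)
      have Keq: "K = {..s}"
      proof
        show "K \<subseteq> {..s}" unfolding s_def using Kb by (auto intro: cSup_upper)
        show "{..s} \<subseteq> K" using sK F_mono unfolding K_def mono_def by (auto intro: order_trans)
      qed
      have "s0 \<le> s" using Keq s0 K_def by auto
      then have "t \<le> F s" using s0 F_mono unfolding mono_def by auto
      moreover have "F s \<le> t" using sK K_def by auto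
      ultimately have Fs: "F s = t" by simp
      have "measure lebesgue (A \<inter> {y. F y \<le> t}) = mu s" unfolding mu_def using Keq K_def by simp
      also have "\<dots> = m * t" using Fs F_eq mpos by (simp add: field_simps)
      also have "{0..1} \<inter> {..t} = {0..t}" using 2 by auto
      ultimately show ?thesis using 2 by simp
    qed
  qed
  have eA: "emeasure lebesgue A \<noteq> 0" "emeasure lebesgue A \<noteq> \<infinity>"
    using emeasure_eq_measure2[OF Al] mpos m_def by auto
  define U where "U = uniform_measure lebesgue A"
  have U: "prob_space U" unfolding U_def using eA by (rule prob_space_uniform_measure)
  have Fl: "F \<in> borel_measurable lebesgue" using Fb by (intro measurable_completion) simp
  have FU: "F \<in> borel_measurable U" using Fl unfolding U_def uniform_measure_def by simp
  have spU: "space U = UNIV" unfolding U_def uniform_measure_def by simp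
  have setsU: "sets U = sets lebesgue" unfolding U_def uniform_measure_def by simp
  define M1 where "M1 = distr U borel F"
  define M2 where "M2 = uniform_measure lborel {0..1::real}"
  have RD1: "real_distribution M1" unfolding M1_def using U FU by (rule prob_space.real_distribution_distr)
  have RD2: "real_distribution M2"
  proof (rule real_distribution.intro)
    show "prob_space M2" unfolding M2_def by (rule prob_space_uniform_measure) auto
    show "real_distribution_axioms M2" by (rule real_distribution_axioms.intro) (simp add: M2_def)
  qed
  have M1B: "measure M1 B = measure lebesgue (A \<inter> F -` B) / m" if "B \<in> sets borel" for B
  proof -
    have "measure M1 B = measure U (F -` B \<inter> space U)" unfolding M1_def using FU that by (rule measure_distr)
    also have "\<dots> = measure lebesgue (A \<inter> (F -` B)) / m"
    proof -
      have pre: "F -` B \<in> sets lebesgue" using measurable_sets[OF Fl that] by simp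
      show ?thesis unfolding U_def spU m_def using eA pre by (subst measure_uniform_measure) auto
    qed
    finally show ?thesis .
  qed
  have M2B: "measure M2 B = measure lborel ({0..1} \<inter> B)" if "B \<in> sets borel" for B
    unfolding M2_def using that by simp
  have "cdf M1 = cdf M2"
  proof
    fix t
    have "cdf M1 t = measure lebesgue (A \<inter> F -` {..t}) / m" unfolding cdf_def using M1B by simp
    also have "A \<inter> F -` {..t} = A \<inter> {y. F y \<le> t}" by auto
    also have "measure lebesgue \<dots> / m = measure lborel ({0..1} \<inter> {..t})" using cdfA mpos by simp
    also have "\<dots> = cdf M2 t" unfolding cdf_def using M2B by simp
    finally show "cdf M1 t = cdf M2 t" .
  qed
  then have M12: "M1 = M2" using RD1 RD2 cdf_unique by blast
  show "measure lebesgue (A \<inter> F -` B) = measure lebesgue A * measure lborel ({0..1} \<inter> B)"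
    if "B \<in> sets borel" for B
    using M1B[OF that] M2B[OF that] M12 mpos m_def by (simp add: field_simps)
qed

theorem lemma2p7:
  fixes V :: "'a set" and E :: "'a \<Rightarrow> 'a \<Rightarrow> bool"
    and f g :: "'a \<Rightarrow> real" and L :: "'a \<Rightarrow> real set"
  assumes "graph V E"
    and "demand_function V f" and "demand_function V g"
    and "fractional_list_assignment V L"
    and "\<forall>v\<in>V. g v \<le> f v * measure lebesgue (L v)"
    and "\<forall>S. S \<subseteq> V \<longrightarrow> measure lebesgue ({0..1} \<inter> (\<Inter>v\<in>S. L v)) > 0
           \<longrightarrow> (\<exists>\<phi>. f_coloring S E f \<phi>)"
  shows "\<exists>\<phi>. gL_coloring V E g L \<phi>"
proof -
  have finV: "finite V" using assms(1) by (simp add: graph_def)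
  have Lmeas: "L v \<in> sets lebesgue" and Lsub: "L v \<subseteq> {0..1}" if "v \<in> V" for v
    using assms(4) that by (auto simp: fractional_list_assignment_def)
  have fnn: "0 \<le> f v" if "v \<in> V" for v using assms(2) that by (simp add: demand_function_def)
  define R where "R S = {x \<in> {0..1}. \<forall>v\<in>V. x \<in> L v \<longleftrightarrow> v \<in> S}" for S
  have Rsub: "R S \<subseteq> {0..1}" for S unfolding R_def by auto
  have Req: "R S = {0..1} - (\<Union>v\<in>V. if v \<in> S then {0..1} - L v else L v)" for S
    unfolding R_def by auto
  have Rmeas: "R S \<in> sets lebesgue" for S
    unfolding Req using finV Lmeas by (intro sets.Diff sets.finite_UN) auto
  have bnd: "bounded ({0..1::real})" by (rule compact_imp_bounded[OF compact_Icc])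
  have Rl: "R S \<in> lmeasurable" for S
    using Rmeas Rsub bnd by (meson bounded_subset bounded_set_imp_lmeasurable)
  have Rdisj: "S = S'" if "S \<subseteq> V" "S' \<subseteq> V" "x \<in> R S" "x \<in> R S'" for S S' x
    using that unfolding R_def by blast
  have RdisjI: "R S \<inter> R S' = {}" if "S \<subseteq> V" "S' \<subseteq> V" "S \<noteq> S'" for S S'
  proof (rule ccontr)
    assume "R S \<inter> R S' \<noteq> {}"
    then obtain x where x: "x \<in> R S" "x \<in> R S'" by blast
    have "S = S'" by (rule Rdisj[OF that(1,2) x])
    then show False using that(3) by simp
  qed
  define Good where "Good = {S. S \<subseteq> V \<and> measure lebesgue (R S) > 0}"
  have finGood: "finite Good" unfolding Good_def using finV by (rule rev_finite_subset[OF finite_Pow_iff[THEN iffD2]]) auto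
  have exc: "\<exists>\<psi>. f_coloring S E f \<psi>" if "S \<in> Good" for S
  proof -
    have SV: "S \<subseteq> V" and pos: "measure lebesgue (R S) > 0" using that Good_def by auto
    have eq: "{0..1} \<inter> (\<Inter>v\<in>S. L v) = {0..1} - (\<Union>v\<in>S. {0..1} - L v)" by auto
    have "finite S" using SV finV by (rule finite_subset)
    then have meas: "{0..1} \<inter> (\<Inter>v\<in>S. L v) \<in> sets lebesgue"
      unfolding eq using SV Lmeas by (intro sets.Diff sets.finite_UN) auto
    have lm: "{0..1} \<inter> (\<Inter>v\<in>S. L v) \<in> lmeasurable"
      using meas bnd by (meson Int_lower1 bounded_subset bounded_set_imp_lmeasurable)
    have "R S \<subseteq> {0..1} \<inter> (\<Inter>v\<in>S. L v)" using SV unfolding R_def by auto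
    then have "measure lebesgue (R S) \<le> measure lebesgue ({0..1} \<inter> (\<Inter>v\<in>S. L v))"
      using lm Rmeas by (intro measure_mono_fmeasurable) auto
    then show ?thesis using pos SV assms(6) by auto
  qed
  then obtain \<psi> where \<psi>: "\<And>S. S \<in> Good \<Longrightarrow> f_coloring S E f (\<psi> S)" by metis
  have exB: "\<exists>B \<in> sets borel. B \<subseteq> \<psi> S v \<and> measure lebesgue B = measure lebesgue (\<psi> S v)"
    if "S \<in> Good" "v \<in> S" for S v
    using \<psi>[OF that(1)] that(2) by (intro borel_inner) (auto simp: f_coloring_def fractional_coloring_def)
  define Bo where "Bo S v = (SOME B. B \<in> sets borel \<and> B \<subseteq> \<psi> S v
      \<and> measure lebesgue B = measure lebesgue (\<psi> S v))" for S v
  have Bo: "Bo S v \<in> sets borel \<and> Bo S v \<subseteq> \<psi> S v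
      \<and> measure lebesgue (Bo S v) = measure lebesgue (\<psi> S v)" if "S \<in> Good" "v \<in> S" for S v
    unfolding Bo_def using someI_ex[OF exB[OF that, unfolded Bex_def]] .
  define FF where "FF S = (\<lambda>x. measure lebesgue (R S \<inter> {..x}) / measure lebesgue (R S))" for S
  have FFb: "FF S \<in> borel_measurable borel" if "S \<in> Good" for S
    unfolding FF_def using Rmeas Rsub that Good_def by (intro transport(1)) auto
  have FFm: "measure lebesgue (R S \<inter> FF S -` B) = measure lebesgue (R S) * measure lborel ({0..1} \<inter> B)"
    if "S \<in> Good" "B \<in> sets borel" for S B
    unfolding FF_def using Rmeas Rsub that Good_def by (intro transport(2)) auto
  define P where "P v S = R S \<inter> FF S -` Bo S v" for v S
  define \<phi> where "\<phi> v = (\<Union>S\<in>{S\<in>Good. v \<in> S}. P v S)" for v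
  have pre: "FF S -` Bo S v \<in> sets lebesgue" if "S \<in> Good" "v \<in> S" for v S
  proof -
    have "FF S -` Bo S v \<in> sets borel" using measurable_sets[OF FFb[OF that(1)] Bo[OF that, THEN conjunct1]] by simp
    then show ?thesis by (simp add: sets_completionI_sets)
  qed
  have Pl: "P v S \<in> lmeasurable" if "S \<in> Good" "v \<in> S" for v S
    unfolding P_def using Rl pre[OF that] by (rule fmeasurable_Int_fmeasurable)
  have Pmeas: "P v S \<in> sets lebesgue" if "S \<in> Good" "v \<in> S" for v S
    using Pl[OF that] by (rule fmeasurableD)
  have Pmeasure: "measure lebesgue (P v S) \<ge> measure lebesgue (R S) * f v" if "S \<in> Good" "v \<in> S" for v S
  proof -
    have B: "Bo S v \<in> sets borel" "Bo S v \<subseteq> \<psi> S v" "measure lebesgue (Bo S v) = measure lebesgue (\<psi> S v)"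
      using Bo[OF that] by auto
    have fc: "f_coloring S E f (\<psi> S)" using \<psi> that by auto
    have "\<psi> S v \<subseteq> {0..1}" "measure lebesgue (\<psi> S v) \<ge> f v"
      using fc that(2) by (auto simp: f_coloring_def fractional_coloring_def)
    then have sub: "{0..1} \<inter> Bo S v = Bo S v" using B by auto
    have "measure lebesgue (P v S) = measure lebesgue (R S) * measure lborel (Bo S v)"
      using FFm[OF that(1) B(1)] unfolding P_def sub .
    also have "measure lborel (Bo S v) = measure lebesgue (Bo S v)"
      by (rule measure_completion[symmetric]) (simp add: B(1))
    also have "\<dots> = measure lebesgue (\<psi> S v)" by (rule B(3))
    finally show ?thesis using \<open>measure lebesgue (\<psi> S v) \<ge> f v\<close> measure_nonneg[of lebesgue "R S"]
      by (simp add: mult_left_mono)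
  qed
  have \<phi>meas: "\<phi> v \<in> sets lebesgue" for v
    unfolding \<phi>_def using finGood Pmeas by (intro sets.finite_UN) auto
  have \<phi>sub: "\<phi> v \<subseteq> {0..1}" for v unfolding \<phi>_def P_def using Rsub by blast
  have \<phi>L: "\<phi> v \<subseteq> L v" if "v \<in> V" for v unfolding \<phi>_def P_def R_def using that by blast
  have \<phi>disj: "\<phi> u \<inter> \<phi> v = {}" if "u \<in> V" "v \<in> V" "E u v" for u v
  proof (rule ccontr)
    assume "\<phi> u \<inter> \<phi> v \<noteq> {}"
    then obtain x S S' where x: "S \<in> Good" "u \<in> S" "x \<in> P u S" "S' \<in> Good" "v \<in> S'" "x \<in> P v S'"
      unfolding \<phi>_def by blast
    have "S = S'" using x Rdisj[of S S' x] unfolding Good_def P_def by auto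
    have "FF S x \<in> Bo S u" using x(3) unfolding P_def by auto
    moreover have "FF S x \<in> Bo S v" using x(6) \<open>S = S'\<close> unfolding P_def by auto
    ultimately have "FF S x \<in> \<psi> S u \<inter> \<psi> S v"
      using Bo[OF x(1,2)] Bo[OF x(4,5)] \<open>S = S'\<close> by auto
    moreover have "\<psi> S u \<inter> \<psi> S v = {}" using \<psi>[OF x(1)] x(2,5) \<open>S = S'\<close> that(3)
      by (auto simp: f_coloring_def fractional_coloring_def)
    ultimately show False by blast
  qed
  have \<phi>measure: "measure lebesgue (\<phi> v) \<ge> g v" if "v \<in> V" for v
  proof -
    define I where "I = {S\<in>Good. v \<in> S}"
    define J where "J = {S. S \<subseteq> V \<and> v \<in> S}"
    have finI: "finite I" using finGood I_def by auto
    have finJ: "finite J" unfolding J_def using finV by (rule rev_finite_subset[OF finite_Pow_iff[THEN iffD2]]) auto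
    have IJ: "I \<subseteq> J" unfolding I_def J_def Good_def by auto
    have "measure lebesgue (\<phi> v) = (\<Sum>S\<in>I. measure lebesgue (P v S))"
      unfolding \<phi>_def I_def[symmetric]
    proof (rule measure_finite_Union[OF finI])
      show "(P v) ` I \<subseteq> sets lebesgue" using Pmeas I_def by auto
      show "disjoint_family_on (P v) I"
      proof (unfold disjoint_family_on_def, intro ballI impI)
        fix S S' assume "S \<in> I" "S' \<in> I" "S \<noteq> S'"
        then have "R S \<inter> R S' = {}" using RdisjI unfolding I_def Good_def by auto
        then show "P v S \<inter> P v S' = {}" unfolding P_def by auto
      qed
      show "emeasure lebesgue (P v S) \<noteq> \<infinity>" if "S \<in> I" for S
      proof -
        have "S \<in> Good" "v \<in> S" using that unfolding I_def by auto
        then show ?thesis using Pl[of S v] by (metis fmeasurableD2 infinity_ennreal_def)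
      qed
    qed
    also have "\<dots> \<ge> (\<Sum>S\<in>I. measure lebesgue (R S) * f v)"
      using Pmeasure I_def by (intro sum_mono) auto
    finally have 1: "measure lebesgue (\<phi> v) \<ge> (\<Sum>S\<in>I. measure lebesgue (R S)) * f v"
      by (simp add: sum_distrib_right)
    have "(\<Sum>S\<in>I. measure lebesgue (R S)) = (\<Sum>S\<in>J. measure lebesgue (R S))"
    proof (rule sum.mono_neutral_left[OF finJ IJ])
      show "\<forall>S\<in>J - I. measure lebesgue (R S) = 0"
      proof
        fix S assume "S \<in> J - I"
        then have "\<not> measure lebesgue (R S) > 0" unfolding I_def J_def Good_def by auto
        then show "measure lebesgue (R S) = 0" using measure_nonneg[of lebesgue "R S"] by linarith
      qed
    qed
    also have "\<dots> = measure lebesgue (\<Union>S\<in>J. R S)"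
    proof (rule measure_finite_Union[OF finJ, symmetric])
      show "R ` J \<subseteq> sets lebesgue" using Rmeas by auto
      show "disjoint_family_on R J"
        unfolding disjoint_family_on_def J_def using RdisjI by auto
      show "emeasure lebesgue (R S) \<noteq> \<infinity>" for S
        using Rl[of S] by (metis fmeasurableD2 infinity_ennreal_def)
    qed
    also have "(\<Union>S\<in>J. R S) = L v"
    proof
      show "(\<Union>S\<in>J. R S) \<subseteq> L v" unfolding J_def R_def using that by blast
      show "L v \<subseteq> (\<Union>S\<in>J. R S)"
      proof
        fix x assume x: "x \<in> L v"
        let ?S = "{w\<in>V. x \<in> L w}"
        have "x \<in> R ?S" unfolding R_def using x Lsub[OF that] by auto
        moreover have "?S \<in> J" unfolding J_def using x that by auto
        ultimately show "x \<in> (\<Union>S\<in>J. R S)" by blast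
      qed
    qed
    finally have eq: "(\<Sum>S\<in>I. measure lebesgue (R S)) = measure lebesgue (L v)" .
    have g: "g v \<le> f v * measure lebesgue (L v)" using assms(5) that by blast
    have 2: "f v * measure lebesgue (L v) \<le> measure lebesgue (\<phi> v)"
      using 1 unfolding eq by (simp add: mult.commute)
    show ?thesis using g 2 by linarith
  qed
  have "gL_coloring V E g L \<phi>"
    unfolding gL_coloring_def f_coloring_def fractional_coloring_def
    by (simp add: \<phi>meas \<phi>sub \<phi>L \<phi>disj \<phi>measure)
  then show ?thesis by blast
qed

end
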